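(* An almost discrete (Tychonoff) space $X$ is weakly Grothendieck if and only if $t(X)=\omega$.
   Context: A space is almost discrete if it has exactly one non-isolated point. $C_p(X)$ is the space of continuous real-valued functions on $X$ with the pointwise convergence topology. A space $Z$ is a $g$-space if every subset $A\subseteq Z$ such that every infinite subset of $A$ has an accumulation point in $Z$ has compact closure in $Z$; $X$ is weakly Grothendieck if $C_p(X)$ is a $g$-space. $t(X)$ denotes the tightness of $X$. *)

theory Defs
  imports "HOL-Analysis.Analysis"
begin

definition tychonoff_space :: "'a topology \<Rightarrow> bool" where
  "tychonoff_space X \<equiv> t1_space X \<and> completely_regular_space X"

definition almost_discrete :: "'a topology \<Rightarrow> bool" where
  "almost_discrete X \<equiv> (\<exists>!x. x \<in> topspace X \<and> \<not> openin X {x})"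

definition Cp :: "'a topology \<Rightarrow> ('a \<Rightarrow> real) topology" where
  "Cp X = subtopology (product_topology (\<lambda>_. euclideanreal) (topspace X))
            {f \<in> extensional (topspace X). continuous_map X euclideanreal f}"

definition g_space :: "'b topology \<Rightarrow> bool" where
  "g_space Z \<equiv> (\<forall>A \<subseteq> topspace Z.
      (\<forall>B \<subseteq> A. infinite B \<longrightarrow> Z derived_set_of B \<noteq> {})
        \<longrightarrow> compactin Z (Z closure_of A))"

definition weakly_Grothendieck :: "'a topology \<Rightarrow> bool" where
  "weakly_Grothendieck X \<equiv> g_space (Cp X)"

definition countable_tightness :: "'a topology \<Rightarrow> bool" where
  "countable_tightness X \<equiv> (\<forall>A \<subseteq> topspace X. \<forall>x \<in> X closure_of A.
      \<exists>B \<subseteq> A. countable B \<and> x \<in> X closure_of B)"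

end

theory Submission
  imports Defs
begin

definition PT :: "'a topology \<Rightarrow> ('a \<Rightarrow> real) topology" where
  "PT X = product_topology (\<lambda>_. euclideanreal) (topspace X)"
definition CC :: "'a topology \<Rightarrow> ('a \<Rightarrow> real) set" where
  "CC X = {f \<in> extensional (topspace X). continuous_map X euclideanreal f}"

lemma Cp_eq: "Cp X = subtopology (PT X) (CC X)"
  by (simp add: Cp_def PT_def CC_def)

lemma CC_sub: "CC X \<subseteq> topspace (PT X)"
  by (auto simp: CC_def PT_def PiE_def)

lemma top_Cp: "topspace (Cp X) = CC X"
  using CC_sub[of X] by (auto simp: Cp_eq)

lemma Haus_PT: "Hausdorff_space (PT X)"
  by (simp add: PT_def Hausdorff_space_product_topology)

lemma t1_Cp: "t1_space (Cp X)"
  by (simp add: Cp_eq Haus_PT Hausdorff_imp_t1_space t1_space_subtopology)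

lemma closD: "x \<in> X closure_of S \<Longrightarrow> openin X V \<Longrightarrow> x \<in> V \<Longrightarrow> \<exists>y\<in>S. y \<in> V"
  by (auto simp: in_closure_of)

lemma nclosD: "x \<in> topspace X \<Longrightarrow> x \<notin> X closure_of S \<Longrightarrow> \<exists>V. openin X V \<and> x \<in> V \<and> V \<inter> S = {}"
  by (auto simp: in_closure_of)

lemma L_acc:
  assumes "t1_space Z" "z \<in> Z derived_set_of S" "openin Z W" "z \<in> W"
  shows "infinite (W \<inter> S)"
proof
  assume fin: "finite (W \<inter> S)"
  define F where "F = W \<inter> S \<inter> topspace Z - {z}"
  have "finite F" using fin unfolding F_def by (rule finite_subset[rotated]) blast
  moreover have "F \<subseteq> topspace Z" by (auto simp: F_def)
  ultimately have "closedin Z F" using assms(1) t1_space_closedin_finite by blast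
  then have "openin Z (W - F)" using assms(3) by (simp add: openin_diff)
  moreover have "z \<in> W - F" using assms(4) by (simp add: F_def)
  ultimately obtain y where "y \<noteq> z" "y \<in> S" "y \<in> W - F"
    using assms(2) unfolding in_derived_set_of by blast
  moreover have "y \<in> topspace Z" using \<open>y \<in> W - F\<close> assms(3) openin_subset by blast
  ultimately show False by (auto simp: F_def)
qed

lemma L_open:
  assumes "finite J" "J \<subseteq> topspace X"
  shows "openin (PT X) {k \<in> topspace (PT X). \<forall>j\<in>J. \<bar>k j - c j\<bar> < d}"
  using assms
proof (induction J rule: finite_induct)
  case empty
  then show ?case by simp
next
  case (insert j J)
  have o1: "openin (PT X) {k \<in> topspace (PT X). k j \<in> ball (c j) d}"
    unfolding PT_def
    by (rule openin_continuous_map_preimage[OF continuous_map_product_projection])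
       (use insert in auto)
  have "{k \<in> topspace (PT X). \<forall>i\<in>insert j J. \<bar>k i - c i\<bar> < d}
      = {k \<in> topspace (PT X). k j \<in> ball (c j) d} \<inter> {k \<in> topspace (PT X). \<forall>j\<in>J. \<bar>k j - c j\<bar> < d}"
    by (auto simp: dist_real_def abs_minus_commute)
  then show ?case using o1 insert by (simp add: openin_Int)
qed

lemma L_cont:
  assumes pT: "p \<in> topspace X" and iso: "\<forall>y\<in>topspace X. y \<noteq> p \<longrightarrow> openin X {y}"
    and c: "\<forall>e>0. \<exists>U. openin X U \<and> p \<in> U \<and> (\<forall>y\<in>U. \<bar>g y - g p\<bar> < e)"
  shows "continuous_map X euclideanreal g"
  unfolding continuous_map_def
proof (intro conjI allI impI)
  show "g \<in> topspace X \<rightarrow> topspace euclideanreal" by simp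
  fix V :: "real set" assume "openin euclideanreal V"
  then have oV: "open V" by simp
  show "openin X {x \<in> topspace X. g x \<in> V}"
  proof (rule openin_subopen[THEN iffD2], intro ballI)
    fix x assume x: "x \<in> {x \<in> topspace X. g x \<in> V}"
    show "\<exists>T. openin X T \<and> x \<in> T \<and> T \<subseteq> {x \<in> topspace X. g x \<in> V}"
    proof (cases "x = p")
      case False
      then show ?thesis using x iso by (intro exI[of _ "{x}"]) auto
    next
      case True
      obtain e where e: "e > 0" "ball (g p) e \<subseteq> V" using oV x True open_contains_ball by blast
      obtain U where U: "openin X U" "p \<in> U" "\<forall>y\<in>U. \<bar>g y - g p\<bar> < e" using c e by blast
      have "U \<subseteq> {x \<in> topspace X. g x \<in> V}"
        using U e openin_subset[OF U(1)] by (force simp: dist_real_def abs_minus_commute)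
      then show ?thesis using U True by blast
    qed
  qed
qed

lemma dir1:
  assumes pT: "p \<in> topspace X" and iso: "\<forall>y\<in>topspace X. y \<noteq> p \<longrightarrow> openin X {y}"
    and ct: "countable_tightness X"
  shows "g_space (Cp X)"
  unfolding g_space_def
proof (intro allI impI)
  fix A assume AT: "A \<subseteq> topspace (Cp X)" and H: "\<forall>B\<subseteq>A. infinite B \<longrightarrow> Cp X derived_set_of B \<noteq> {}"
  define T where "T = topspace X"
  define P where "P = PT X"
  have AC: "A \<subseteq> CC X" using AT unfolding top_Cp .
  have topP: "topspace P = PiE T (\<lambda>_. UNIV)" by (simp add: P_def PT_def T_def)
  have bnd: "\<forall>x\<in>T. \<exists>M. \<forall>f\<in>A. \<bar>f x\<bar> \<le> M"
  proof (rule ccontr)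
    assume "\<not> ?thesis"
    then obtain x where xT: "x\<in>T" and nb: "\<forall>M. \<exists>f\<in>A. \<bar>f x\<bar> > M" by (auto simp: not_le)
    then have "\<forall>n::nat. \<exists>f. f \<in> A \<and> \<bar>f x\<bar> > real n" by blast
    then have "\<exists>fs. \<forall>n. fs n \<in> A \<and> \<bar>fs n x\<bar> > real n" by (rule choice)
    then obtain fs where fs: "\<forall>n. fs n \<in> A \<and> \<bar>fs n x\<bar> > real n" by blast
    have inf: "infinite (range fs)"
    proof
      assume fin: "finite (range fs)"
      define M where "M = Max ((\<lambda>f. \<bar>f x\<bar>) ` range fs)"
      have "\<bar>fs n x\<bar> \<le> M" for n unfolding M_def using fin by (intro Max_ge) auto
      moreover have "real (nat \<lceil>M\<rceil>) \<ge> M" by linarith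
      ultimately show False using fs by (metis leD order.trans less_imp_le)
    qed
    have "range fs \<subseteq> A" using fs by auto
    then obtain h where h: "h \<in> Cp X derived_set_of (range fs)" using H inf by blast
    have hC: "h \<in> CC X" using h derived_set_of_subset_topspace[of "Cp X" "range fs"] unfolding top_Cp by blast
    define W where "W = {k \<in> topspace P. \<forall>j\<in>{x}. \<bar>k j - h j\<bar> < 1}"
    have oW: "openin P W" unfolding W_def P_def by (rule L_open) (use xT T_def in auto)
    have "openin (Cp X) (W \<inter> CC X)" unfolding Cp_eq using oW P_def by (simp add: openin_subtopology_Int)
    moreover have "h \<in> W \<inter> CC X" using hC CC_sub by (auto simp: W_def P_def)
    ultimately have inf2: "infinite (W \<inter> CC X \<inter> range fs)" using L_acc[OF t1_Cp h] by blast
    have "W \<inter> CC X \<inter> range fs \<subseteq> fs ` {..< nat \<lceil>\<bar>h x\<bar> + 1\<rceil>}"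
    proof
      fix k assume "k \<in> W \<inter> CC X \<inter> range fs"
      then obtain n where n: "k = fs n" "\<bar>fs n x - h x\<bar> < 1" by (auto simp: W_def)
      then have "real n < \<bar>h x\<bar> + 1" using fs by (smt (verit))
      then have "n < nat \<lceil>\<bar>h x\<bar> + 1\<rceil>" by linarith
      then show "k \<in> fs ` {..< nat \<lceil>\<bar>h x\<bar> + 1\<rceil>}" using n by auto
    qed
    then show False using inf2 finite_subset by blast
  qed
  obtain M where M: "\<forall>x\<in>T. \<forall>f\<in>A. \<bar>f x\<bar> \<le> M x" using bnd by metis
  define K where "K = P closure_of A"
  define Box where "Box = PiE T (\<lambda>x. {- M x .. M x})"
  have cBox: "compactin P Box" unfolding Box_def P_def PT_def T_def
    by (simp add: compactin_PiE)
  have "closedin P Box" using cBox Haus_PT P_def compactin_imp_closedin by blast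
  moreover have "A \<subseteq> Box"
  proof
    fix f assume "f \<in> A"
    have e: "f \<in> extensional T" using AC \<open>f \<in> A\<close> by (auto simp: CC_def T_def)
    have "f x \<in> {- M x .. M x}" if "x \<in> T" for x
    proof -
      have "\<bar>f x\<bar> \<le> M x" using M that \<open>f \<in> A\<close> by blast
      then show ?thesis by (simp add: abs_le_iff)
    qed
    then show "f \<in> Box" using e by (auto simp: Box_def PiE_def)
  qed
  ultimately have "K \<subseteq> Box" unfolding K_def by (simp add: closure_of_minimal)
  then have Kcomp: "compactin P K" using cBox closed_compactin K_def closedin_closure_of by blast
  have KC: "K \<subseteq> CC X"
  proof
    fix g assume gK: "g \<in> K"
    then have gP: "g \<in> topspace P" using closure_of_subset_topspace[of P A] unfolding K_def by blast
    then have ext: "g \<in> extensional T" using topP by (simp add: PiE_def)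
    have "continuous_map X euclideanreal g"
    proof (rule ccontr)
      assume nc: "\<not> continuous_map X euclideanreal g"
      then obtain e where e: "e > 0" "\<forall>U. openin X U \<and> p \<in> U \<longrightarrow> (\<exists>y\<in>U. \<bar>g y - g p\<bar> \<ge> e)"
        using L_cont[OF pT iso, of g] by (metis not_less)
      define Q where "Q = {y\<in>T. \<bar>g y - g p\<bar> \<ge> e}"
      have QT: "Q \<subseteq> T" by (auto simp: Q_def)
      have pQ: "p \<in> X closure_of Q"
        unfolding in_closure_of
      proof (intro conjI allI impI)
        show "p \<in> topspace X" by (rule pT)
        fix U assume "p \<in> U \<and> openin X U"
        then obtain y where "y \<in> U" "\<bar>g y - g p\<bar> \<ge> e" using e by blast
        moreover have "y \<in> T" using \<open>y \<in> U\<close> \<open>p \<in> U \<and> openin X U\<close> openin_subset T_def by blast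
        ultimately show "\<exists>y. y \<in> Q \<and> y \<in> U" by (auto simp: Q_def)
      qed
      obtain C where C: "C \<subseteq> Q" "countable C" "p \<in> X closure_of C"
        using ct pQ QT unfolding countable_tightness_def T_def by blast
      have Cne: "C \<noteq> {}" using C(3) by auto
      define ee where "ee = from_nat_into C"
      have rng: "range ee = C" using Cne C(2) by (simp add: ee_def)
      have CT: "insert p C \<subseteq> T" using C QT pT T_def by auto
      have approx: "\<exists>f\<in>A. \<forall>j\<in>insert p (ee ` {..n}). \<bar>f j - g j\<bar> < 1 / real (Suc n)" for n
      proof -
        define J where "J = insert p (ee ` {..n})"
        have JT: "J \<subseteq> T" using CT rng by (auto simp: J_def)
        define W where "W = {k \<in> topspace P. \<forall>j\<in>J. \<bar>k j - g j\<bar> < 1 / real (Suc n)}"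
        have "openin P W" unfolding W_def P_def by (rule L_open) (use JT T_def J_def in auto)
        moreover have "g \<in> W" using gP by (simp add: W_def)
        ultimately obtain f where "f \<in> A" "f \<in> W" using closD[of g P A W] gK unfolding K_def by blast
        then show ?thesis by (auto simp: W_def J_def)
      qed
      then obtain fs where fs: "\<forall>n. fs n \<in> A \<and> (\<forall>j\<in>insert p (ee ` {..n}). \<bar>fs n j - g j\<bar> < 1 / real (Suc n))"
        by metis
      have conv: "\<exists>N. \<forall>n\<ge>N. \<bar>fs n j - g j\<bar> < d" if j: "j \<in> insert p C" and d: "d > 0" for j d
      proof -
        obtain i where i: "j = p \<or> j = ee i" using j rng by auto
        obtain N0 where N0: "inverse (real (Suc N0)) < d" using reals_Archimedean[OF d] by blast
        have "\<forall>n\<ge>max N0 i. \<bar>fs n j - g j\<bar> < d"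
        proof (intro allI impI)
          fix n assume n: "n \<ge> max N0 i"
          have "j \<in> insert p (ee ` {..n})" using i n by auto
          then have "\<bar>fs n j - g j\<bar> < 1 / real (Suc n)" using fs by blast
          also have "\<dots> \<le> 1 / real (Suc N0)" using n by (simp add: frac_le)
          also have "\<dots> < d" using N0 by (simp add: inverse_eq_divide)
          finally show "\<bar>fs n j - g j\<bar> < d" .
        qed
        then show ?thesis by blast
      qed
      have key: False if kc: "continuous_map X euclideanreal k" and kg: "\<forall>j\<in>insert p C. k j = g j" for k
      proof -
        have "openin X {y \<in> topspace X. k y \<in> ball (k p) e}"
          by (rule openin_continuous_map_preimage[OF kc]) simp
        moreover have "p \<in> {y \<in> topspace X. k y \<in> ball (k p) e}" using pT e by simp
        ultimately obtain y where "y \<in> C" "y \<in> {y \<in> topspace X. k y \<in> ball (k p) e}"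
          using closD[OF C(3)] by blast
        moreover have "\<bar>g y - g p\<bar> \<ge> e" using \<open>y \<in> C\<close> C(1) by (auto simp: Q_def)
        ultimately show False using kg by (auto simp: dist_real_def abs_minus_commute)
      qed
      show False
      proof (cases "finite (range fs)")
        case True
        then obtain f' where f': "f' \<in> range fs" "infinite (fs -` {f'})"
          using inf_img_fin_dom[of fs UNIV] by auto
        have eq: "\<forall>j\<in>insert p C. f' j = g j"
        proof (rule ccontr)
          assume "\<not> ?thesis"
          then obtain j where j: "j \<in> insert p C" "f' j \<noteq> g j" by blast
          have jpos: "\<bar>f' j - g j\<bar> > 0" using j(2) by simp
          obtain N where N: "\<forall>n\<ge>N. \<bar>fs n j - g j\<bar> < \<bar>f' j - g j\<bar>" using conv[OF j(1) jpos] by blast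
          obtain n where "n \<ge> N" "n \<in> fs -` {f'}" using f'(2) unfolding infinite_nat_iff_unbounded_le by blast
          then show False using N by auto
        qed
        have "f' \<in> CC X" using f'(1) fs AC by auto
        then show False using key eq by (auto simp: CC_def)
      next
        case False
        have "range fs \<subseteq> A" using fs by auto
        then obtain h where h: "h \<in> Cp X derived_set_of (range fs)" using H False by blast
        have hC: "h \<in> CC X" using h derived_set_of_subset_topspace[of "Cp X" "range fs"] unfolding top_Cp by blast
        have eq: "\<forall>j\<in>insert p C. h j = g j"
        proof (rule ccontr)
          assume "\<not> ?thesis"
          then obtain j where j: "j \<in> insert p C" "h j \<noteq> g j" by blast
          define d where "d = \<bar>h j - g j\<bar> / 2"
          have d: "d > 0" using j by (simp add: d_def)
          obtain N where N: "\<forall>n\<ge>N. \<bar>fs n j - g j\<bar> < d" using conv[OF j(1) d] by blast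
          define W where "W = {k \<in> topspace P. \<forall>i\<in>{j}. \<bar>k i - h i\<bar> < d}"
          have oW: "openin P W" unfolding W_def P_def by (rule L_open) (use j CT T_def in auto)
          have "openin (Cp X) (W \<inter> CC X)" unfolding Cp_eq using oW P_def by (simp add: openin_subtopology_Int)
          moreover have "h \<in> W \<inter> CC X" using hC CC_sub d by (auto simp: W_def P_def)
          ultimately have inf2: "infinite (W \<inter> CC X \<inter> range fs)" using L_acc[OF t1_Cp h] by blast
          have "W \<inter> CC X \<inter> range fs \<subseteq> fs ` {..<N}"
          proof
            fix k assume "k \<in> W \<inter> CC X \<inter> range fs"
            then obtain n where n: "k = fs n" "\<bar>fs n j - h j\<bar> < d" by (auto simp: W_def)
            have "\<not> n \<ge> N"
            proof
              assume "n \<ge> N"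
              then have "\<bar>fs n j - g j\<bar> < d" using N by blast
              then show False using n(2) d_def by (simp add: abs_less_iff abs_if split: if_split_asm)
            qed
            then show "k \<in> fs ` {..<N}" using n by auto
          qed
          then show False using inf2 finite_subset by blast
        qed
        then show False using key hC by (auto simp: CC_def)
      qed
    qed
    with ext show "g \<in> CC X" by (simp add: CC_def T_def)
  qed
  have "Cp X closure_of A = K"
    unfolding Cp_eq closure_of_subtopology K_def using AC KC P_def K_def
    by (metis inf.absorb2 inf.absorb_iff2)
  then show "compactin (Cp X) (Cp X closure_of A)"
    using Kcomp KC unfolding Cp_eq by (simp add: compactin_subtopology P_def)
qed

lemma hz:
  assumes pT: "p \<in> topspace X" and iso: "\<forall>y\<in>topspace X. y \<noteq> p \<longrightarrow> openin X {y}"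
    and ext: "h \<in> extensional (topspace X)" and hp: "h p = 0"
    and U: "openin X U" "p \<in> U" "\<forall>y\<in>U. h y = 0"
  shows "h \<in> CC X"
proof -
  have "continuous_map X euclideanreal h"
    by (rule L_cont[OF pT iso]) (use U hp in auto)
  then show ?thesis using ext by (simp add: CC_def)
qed

lemma dir2:
  assumes t1: "t1_space X" and pT: "p \<in> topspace X"
    and iso: "\<forall>y\<in>topspace X. y \<noteq> p \<longrightarrow> openin X {y}"
    and gs: "g_space (Cp X)"
  shows "countable_tightness X"
  unfolding countable_tightness_def
proof (intro allI impI ballI)
  fix A x assume AT: "A \<subseteq> topspace X" and xcl: "x \<in> X closure_of A"
  define T where "T = topspace X"
  define P where "P = PT X"
  have topP: "topspace P = PiE T (\<lambda>_. UNIV)" by (simp add: P_def PT_def T_def)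
  show "\<exists>B\<subseteq>A. countable B \<and> x \<in> X closure_of B"
  proof (rule ccontr)
    assume nB: "\<not> ?thesis"
    have xT: "x \<in> T" using xcl closure_of_subset_topspace[of X A] unfolding T_def by blast
    have xA: "x \<notin> A"
    proof
      assume "x \<in> A"
      have "{x} \<subseteq> topspace X" using xT T_def by simp
      then have "x \<in> X closure_of {x}" using closure_of_subset by blast
      then show False using nB \<open>x \<in> A\<close> by blast
    qed
    have xp: "x = p"
    proof (rule ccontr)
      assume "x \<noteq> p"
      then have "openin X {x}" using iso xT T_def by blast
      then show False using closD[OF xcl, of "{x}"] xA by blast
    qed
    have pA: "p \<notin> A" using xA xp by simp
    have pcl: "p \<in> X closure_of A" using xcl xp by simp
    have hnc: "p \<notin> X closure_of B" if "B \<subseteq> A" "countable B" for B using nB that xp by blast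
    have sep: "\<exists>U. openin X U \<and> p \<in> U \<and> U \<inter> B = {}" if "B \<subseteq> A" "countable B" for B
      using nclosD[OF pT hnc[OF that]] by blast
    define ind where "ind F = restrict (\<lambda>y. if y \<in> F then 1 else (0::real)) T" for F
    have indC: "ind F \<in> CC X" if FA: "F \<subseteq> A" and Fc: "countable F" for F
    proof -
      obtain U where U: "openin X U" "p \<in> U" "U \<inter> F = {}" using sep[OF FA Fc] by blast
      have "\<forall>y\<in>U. ind F y = 0" using U openin_subset[OF U(1)] by (auto simp: ind_def T_def)
      moreover have "ind F p = 0" using pT pA FA by (auto simp: ind_def T_def)
      ultimately show ?thesis using hz[OF pT iso _ _ U(1,2)] by (simp add: ind_def T_def)
    qed
    define S where "S = {ind F | F. finite F \<and> F \<subseteq> A}"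
    have SC: "S \<subseteq> CC X" using indC countable_finite by (auto simp: S_def)
    have acc: "\<forall>B\<subseteq>S. infinite B \<longrightarrow> Cp X derived_set_of B \<noteq> {}"
    proof (intro allI impI)
      fix B assume BS: "B \<subseteq> S" and Binf: "infinite B"
      obtain f :: "nat \<Rightarrow> _" where f: "inj f" "range f \<subseteq> B" using infinite_countable_subset[OF Binf] by blast
      define C where "C = (\<Union>n. {y\<in>A. f n y = 1})"
      have fin: "finite {y\<in>A. f n y = 1}" for n
      proof -
        have "f n \<in> S" using f(2) BS by blast
        then obtain F where F: "f n = ind F" "finite F" "F \<subseteq> A" unfolding S_def by blast
        have "{y\<in>A. f n y = 1} \<subseteq> F" using F AT by (auto simp: ind_def T_def)
        then show ?thesis using F(2) finite_subset by blast
      qed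
      have Cc: "countable C" unfolding C_def using fin by (simp add: countable_finite)
      have CA: "C \<subseteq> A" by (auto simp: C_def)
      obtain U where U: "openin X U" "p \<in> U" "U \<inter> C = {}" using sep[OF CA Cc] by blast
      define Z where "Z = PiE T (\<lambda>y. if y \<in> C then {0,1} else {0::real})"
      have cZ: "compactin P Z" unfolding Z_def P_def PT_def T_def
        by (simp add: compactin_PiE finite_imp_compact)
      have fZ: "range f \<subseteq> Z"
      proof
        fix k assume "k \<in> range f"
        then obtain n where n: "k = f n" by blast
        have "f n \<in> S" using f(2) BS by blast
        then obtain F where F: "f n = ind F" "finite F" "F \<subseteq> A" unfolding S_def by blast
        have "y \<in> C" if "y \<in> F" "y \<in> T" for y using F that by (auto simp: C_def ind_def intro!: exI[of _ n])
        then show "k \<in> Z" using n F by (auto simp: Z_def ind_def PiE_def)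
      qed
      have finf: "infinite (range f)" using f(1) range_inj_infinite by blast
      obtain h where h: "h \<in> Z" "h \<in> P derived_set_of (range f)"
        using compactin_imp_Bolzano_Weierstrass[OF cZ] finf fZ by blast
      have "h \<in> CC X"
      proof (rule hz[OF pT iso _ _ U(1,2)])
        show "h \<in> extensional (topspace X)" using h(1) by (simp add: Z_def PiE_def T_def)
        have hv: "h y \<in> (if y \<in> C then {0,1} else {0})" if "y \<in> topspace X" for y
          using PiE_mem[OF h(1)[unfolded Z_def T_def] that] .
        have "p \<notin> C" using pA CA by blast
        then show "h p = 0" using hv[OF pT] by simp
        show "\<forall>y\<in>U. h y = 0"
        proof
          fix y assume y: "y \<in> U"
          then have "y \<in> topspace X" "y \<notin> C" using U openin_subset[OF U(1)] by blast+
          then show "h y = 0" using hv by fastforce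
        qed
      qed
      moreover have "range f \<subseteq> CC X" using f(2) BS SC by blast
      ultimately have "h \<in> Cp X derived_set_of (range f)" using h(2)
        by (simp add: Cp_eq derived_set_of_subtopology P_def inf.absorb2)
      then show "Cp X derived_set_of B \<noteq> {}" using derived_set_of_mono[OF f(2)] by blast
    qed
    have STop: "S \<subseteq> topspace (Cp X)" using SC unfolding top_Cp .
    have "compactin (Cp X) (Cp X closure_of S)" using gs acc STop unfolding g_space_def by blast
    then have cc: "compactin P (Cp X closure_of S)" "Cp X closure_of S \<subseteq> CC X"
      by (auto simp: Cp_eq compactin_subtopology P_def)
    then have "closedin P (Cp X closure_of S)" using Haus_PT P_def compactin_imp_closedin by blast
    moreover have "S \<subseteq> Cp X closure_of S" using STop closure_of_subset by blast
    ultimately have PS: "P closure_of S \<subseteq> CC X" using cc(2) closure_of_minimal by blast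
    have "ind A \<in> P closure_of S"
      unfolding in_closure_of
    proof (intro conjI allI impI)
      show "ind A \<in> topspace P" using topP by (simp add: ind_def)
      fix W assume W: "ind A \<in> W \<and> openin P W"
      then obtain U where U: "finite {i \<in> T. U i \<noteq> UNIV}" "ind A \<in> PiE T U" "PiE T U \<subseteq> W"
        unfolding P_def PT_def openin_product_topology_alt T_def by force
      define F where "F = {i \<in> T. U i \<noteq> UNIV} \<inter> A"
      have Ff: "finite F" "F \<subseteq> A" using U(1) by (auto simp: F_def)
      have "ind F \<in> PiE T U"
      proof -
        have "ind F i \<in> U i" if "i \<in> T" for i
        proof (cases "U i = UNIV")
          case False
          then have "ind F i = ind A i" using that by (auto simp: ind_def F_def)
          then show ?thesis using U(2) that by (metis PiE_E)
        qed simp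
        then show ?thesis by (simp add: ind_def)
      qed
      moreover have "ind F \<in> S" using Ff by (auto simp: S_def)
      ultimately show "\<exists>y. y \<in> S \<and> y \<in> W" using U(3) by blast
    qed
    then have "ind A \<in> CC X" using PS by blast
    then have cont: "continuous_map X euclideanreal (ind A)" by (simp add: CC_def)
    have "openin X {y \<in> topspace X. ind A y \<in> {..<1/2}}"
      by (rule openin_continuous_map_preimage[OF cont]) simp
    moreover have "p \<in> {y \<in> topspace X. ind A y \<in> {..<1/2}}" using pT pA by (simp add: ind_def T_def)
    ultimately obtain y where "y \<in> A" "ind A y < 1/2" using closD[OF pcl] by blast
    moreover have "y \<in> topspace X" using \<open>y \<in> A\<close> AT by blast
    ultimately show False by (simp add: ind_def T_def)
  qed
qed

theorem corollary2:
  fixes X :: "'a topology"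
  assumes "tychonoff_space X" and "almost_discrete X"
  shows "weakly_Grothendieck X \<longleftrightarrow> countable_tightness X"
proof -
  have t1: "t1_space X" using assms(1) by (simp add: tychonoff_space_def)
  obtain p where p: "p \<in> topspace X" "\<not> openin X {p}"
    and u: "\<forall>y. y \<in> topspace X \<and> \<not> openin X {y} \<longrightarrow> y = p"
    using assms(2) unfolding almost_discrete_def by blast
  have iso: "\<forall>y\<in>topspace X. y \<noteq> p \<longrightarrow> openin X {y}" using u by blast
  show ?thesis unfolding weakly_Grothendieck_def
    using dir1[OF p(1) iso] dir2[OF t1 p(1) iso] by blast
qed

end
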